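(* Let $q$ be a prime power, $k\ge 2$, $m,n$ positive integers, and let $\mathcal C$ be a nondegenerate $[n,k]_{q^m/q}$ code with generalized rank weights $(d_1,\ldots,d_k)$. Then $\mathcal C$ is minimal if and only if $d_2\ge m+1$.
   Context: An $[n,k]_{q^m/q}$ code is a $k$-dimensional $\mathbb F_{q^m}$-subspace of $\mathbb F_{q^m}^n$ endowed with the rank metric. For $v=(v_1,\ldots,v_n)\in\mathbb F_{q^m}^n$, its rank weight is $\dim_{\mathbb F_q}\langle v_1,\ldots,v_n\rangle_{\mathbb F_q}=r$; if $u=(u_1,\ldots,u_r)$ is an $\mathbb F_q$-basis of $\langle v_1,\ldots,v_n\rangle_{\mathbb F_q}$ and $v=uA$ with $A\in\mathbb F_q^{r\times n}$, the rank support of $v$ is $\mathrm{supp}(v)=$ the $\mathbb F_q$-row space of $A$ (independent of the choice of $u$). A nonzero codeword $v\in\mathcal C$ is minimal if for every $u\in\mathcal C$: $\mathrm{supp}(u)\subseteq\mathrm{supp}(v)$ iff $u=\lambda v$ for some $\lambda\in\mathbb F_{q^m}$; $\mathcal C$ is minimal if all its nonzero codewords are minimal. An $\mathbb F_{q^m}$-subspace $\mathcal A\subseteq\mathbb F_{q^m}^n$ is Galois closed if it is mapped to itself by the coordinatewise $q$-Frobenius map. The $j$-th generalized rank weight is $d_j=\min\{\dim_{\mathbb F_{q^m}}\mathcal A: \mathcal A \text{ Galois closed}, \dim_{\mathbb F_{q^m}}(\mathcal A\cap\mathcal C)\ge j\}$. $\mathcal C$ is nondegenerate if $d_k=n$.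 *)

theory Defs
  imports Main "HOL-Computational_Algebra.Primes"
begin

text \<open>Field F_{q^m} is a finite field type 'a with q^m elements; F_q is its subfield
  {x. x^q = x}. Vectors of F_{q^m}^n are functions nat => 'a vanishing outside {..<n}.\<close>

definition subfield_q :: "nat \<Rightarrow> ('a::{finite,field}) set" where
  "subfield_q q = {x. x ^ q = x}"

definition vecs :: "nat \<Rightarrow> (nat \<Rightarrow> 'a::field) set" where
  "vecs n = {v. \<forall>i\<ge>n. v i = 0}"

definition lcomb :: "'a::field list \<Rightarrow> (nat \<Rightarrow> 'a) list \<Rightarrow> (nat \<Rightarrow> 'a)" where
  "lcomb cs vs = (\<lambda>i. \<Sum>j<length vs. cs ! j * (vs ! j) i)"

definition vspan :: "'a::field set \<Rightarrow> (nat \<Rightarrow> 'a) set \<Rightarrow> (nat \<Rightarrow> 'a) set" where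
  "vspan K S = {v. \<exists>vs cs. set vs \<subseteq> S \<and> length cs = length vs \<and> set cs \<subseteq> K \<and> v = lcomb cs vs}"

definition lin_indep :: "'a::field set \<Rightarrow> (nat \<Rightarrow> 'a) list \<Rightarrow> bool" where
  "lin_indep K vs \<longleftrightarrow> (\<forall>cs. length cs = length vs \<and> set cs \<subseteq> K \<and> lcomb cs vs = (\<lambda>i. 0)
      \<longrightarrow> set cs \<subseteq> {0})"

definition vsubspace :: "'a::field set \<Rightarrow> (nat \<Rightarrow> 'a) set \<Rightarrow> bool" where
  "vsubspace K V \<longleftrightarrow> (\<lambda>i. 0) \<in> V \<and> (\<forall>u\<in>V. \<forall>w\<in>V. (\<lambda>i. u i + w i) \<in> V)
      \<and> (\<forall>c\<in>K. \<forall>u\<in>V. (\<lambda>i. c * u i) \<in> V)"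

definition vdim :: "'a::field set \<Rightarrow> (nat \<Rightarrow> 'a) set \<Rightarrow> nat" where
  "vdim K V = (LEAST d. \<exists>vs. length vs = d \<and> lin_indep K vs \<and> set vs \<subseteq> V \<and> vspan K (set vs) = V)"

definition sspan :: "'a::field set \<Rightarrow> 'a set \<Rightarrow> 'a set" where
  "sspan K S = {x. \<exists>us cs. set us \<subseteq> S \<and> length cs = length us \<and> set cs \<subseteq> K
      \<and> x = (\<Sum>j<length us. cs ! j * us ! j)}"

definition sindep :: "'a::field set \<Rightarrow> 'a list \<Rightarrow> bool" where
  "sindep K us \<longleftrightarrow> (\<forall>cs. length cs = length us \<and> set cs \<subseteq> K
      \<and> (\<Sum>j<length us. cs ! j * us ! j) = 0 \<longrightarrow> set cs \<subseteq> {0})"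

text \<open>(u, A) with u an F_q-basis of the span of the entries of v, A in F_q^{r x n}
  (rows indexed by i < r = length u, columns j < n), and v = u A.\<close>
definition supp_repr :: "'a::field set \<Rightarrow> nat \<Rightarrow> (nat \<Rightarrow> 'a) \<Rightarrow> 'a list \<Rightarrow> (nat \<Rightarrow> nat \<Rightarrow> 'a) \<Rightarrow> bool" where
  "supp_repr K n v u A \<longleftrightarrow> sindep K u \<and> sspan K (set u) = sspan K (v ` {..<n})
     \<and> (\<forall>i j. A i j \<in> K) \<and> (\<forall>i j. (i \<ge> length u \<or> j \<ge> n) \<longrightarrow> A i j = 0)
     \<and> (\<forall>j<n. v j = (\<Sum>i<length u. u ! i * A i j))"

definition rank_supp :: "'a::field set \<Rightarrow> nat \<Rightarrow> (nat \<Rightarrow> 'a) \<Rightarrow> (nat \<Rightarrow> 'a) set" where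
  "rank_supp K n v = (let (u, A) = (SOME p. supp_repr K n v (fst p) (snd p))
      in vspan K {(\<lambda>j. A i j) | i. i < length u})"

definition minimal_codeword :: "nat \<Rightarrow> nat \<Rightarrow> (nat \<Rightarrow> 'a::{finite,field}) set \<Rightarrow> (nat \<Rightarrow> 'a) \<Rightarrow> bool" where
  "minimal_codeword q n C v \<longleftrightarrow> v \<in> C \<and> v \<noteq> (\<lambda>i. 0) \<and>
     (\<forall>u\<in>C. rank_supp (subfield_q q) n u \<subseteq> rank_supp (subfield_q q) n v
        \<longleftrightarrow> (\<exists>c. u = (\<lambda>i. c * v i)))"

definition minimal_code :: "nat \<Rightarrow> nat \<Rightarrow> (nat \<Rightarrow> 'a::{finite,field}) set \<Rightarrow> bool" where
  "minimal_code q n C \<longleftrightarrow> (\<forall>v\<in>C. v \<noteq> (\<lambda>i. 0) \<longrightarrow> minimal_codeword q n C v)"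

definition galois_closed :: "nat \<Rightarrow> (nat \<Rightarrow> 'a::field) set \<Rightarrow> bool" where
  "galois_closed q A \<longleftrightarrow> (\<forall>v\<in>A. (\<lambda>i. v i ^ q) \<in> A)"

definition gen_rank_weight :: "nat \<Rightarrow> nat \<Rightarrow> (nat \<Rightarrow> 'a::{finite,field}) set \<Rightarrow> nat \<Rightarrow> nat" where
  "gen_rank_weight q n C j = (LEAST d. \<exists>A. vsubspace UNIV A \<and> A \<subseteq> vecs n \<and> galois_closed q A
      \<and> vdim UNIV (A \<inter> C) \<ge> j \<and> vdim UNIV A = d)"

definition is_code :: "nat \<Rightarrow> nat \<Rightarrow> (nat \<Rightarrow> 'a::field) set \<Rightarrow> bool" where
  "is_code n k C \<longleftrightarrow> vsubspace UNIV C \<and> C \<subseteq> vecs n \<and> vdim UNIV C = k"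

definition nondegenerate :: "nat \<Rightarrow> nat \<Rightarrow> nat \<Rightarrow> (nat \<Rightarrow> 'a::{finite,field}) set \<Rightarrow> bool" where
  "nondegenerate q n k C \<longleftrightarrow> gen_rank_weight q n C k = n"

end

theory Submission
  imports Defs "HOL-Computational_Algebra.Polynomial" "HOL-Number_Theory.Residues"
begin

lemma char_eq_p:
  assumes "prime p" "card (UNIV::'a::{finite,field} set) = p ^ N"
  shows "CHAR('a) = p"
proof -
  have "CHAR('a) dvd p ^ N" using CHAR_dvd_CARD[where 'a='a] assms by simp
  moreover have pc: "prime CHAR('a)"
    using prime_CHAR_semidom finite_imp_CHAR_pos[where ?'a='a] finite_UNIV by auto
  ultimately have "CHAR('a) dvd p" using prime_dvd_power by blast
  thus ?thesis using pc assms(1) primes_dvd_imp_eq by blast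
qed

lemma frob_add:
  assumes "prime p" "card (UNIV::'a::{finite,field} set) = p ^ N" "q = p ^ e"
  shows "((x::'a) + y) ^ q = x ^ q + y ^ q"
  using freshmans_dream'[of q e x y] char_eq_p[OF assms(1,2)] assms by simp

lemma frob_sum:
  assumes "prime p" "card (UNIV::'a::{finite,field} set) = p ^ N" "q = p ^ e"
  shows "(sum (f::'b \<Rightarrow> 'a) A) ^ q = sum (\<lambda>i. f i ^ q) A"
  using freshmans_dream_sum'[of q e f A] char_eq_p[OF assms(1,2)] assms by simp

lemma pow_card_same:
  "(x::'a::{finite,field}) ^ card (UNIV :: 'a set) = x"
proof (cases "x = 0")
  case False
  have "x * (\<Prod>y\<in>UNIV-{0}. x * y) = x * x ^ (card (UNIV :: 'a set) - 1) * \<Prod>(UNIV-{0})"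
    by (simp add: prod.distrib mult_ac)
  also have "x * x ^ (card (UNIV :: 'a set) - 1) = x ^ Suc (card (UNIV :: 'a set) - 1)"
    by (subst power_Suc) auto
  also have "Suc (card (UNIV :: 'a set) - 1) = card (UNIV :: 'a set)"
    using finite_UNIV_card_ge_0[where ?'a = 'a] by simp
  also have "(\<Prod>y\<in>UNIV-{0}. x * y) = (\<Prod>y\<in>UNIV-{0}. y)"
    by (rule prod.reindex_bij_witness[of _ "\<lambda>y. y / x" "\<lambda>y. x * y"]) (use False in auto)
  finally show ?thesis
    by simp
qed (use finite_UNIV_card_ge_0[where ?'a = 'a] in auto)

lemma geom_nat: "((q::nat) - 1) * (\<Sum>i<m. q ^ i) = q ^ m - 1"
proof (cases "q = 0")
  case True thus ?thesis by (cases m) (auto simp: lessThan_Suc)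
next
  case False
  have "int ((q - 1) * (\<Sum>i<m. q ^ i)) = (int q - 1) * (\<Sum>i<m. int q ^ i)"
    using False by (simp add: of_nat_diff)
  also have "\<dots> = int q ^ m - 1" by (simp add: power_diff_1_eq)
  also have "\<dots> = int (q ^ m - 1)" using False by (simp add: of_nat_diff)
  finally show ?thesis by linarith
qed

lemma degree_geom_poly:
  "degree (\<Sum>i<L. Polynomial.monom (1::'a::comm_ring_1) (d * i)) \<le> d * (L - 1)"
proof (induction L)
  case 0 thus ?case by simp
next
  case (Suc L)
  have "degree (\<Sum>i<Suc L. Polynomial.monom (1::'a) (d * i))
        = degree ((\<Sum>i<L. Polynomial.monom (1::'a) (d * i)) + Polynomial.monom 1 (d * L))" by simp
  also have "\<dots> \<le> max (degree (\<Sum>i<L. Polynomial.monom (1::'a) (d * i))) (degree (Polynomial.monom (1::'a) (d * L)))"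
    by (rule degree_add_le_max)
  also have "\<dots> \<le> d * (Suc L - 1)"
  proof -
    have "d * (L - 1) \<le> d * L" by (intro mult_le_mono2) simp
    hence "degree (\<Sum>i<L. Polynomial.monom (1::'a) (d * i)) \<le> d * L" using Suc.IH by linarith
    thus ?thesis using degree_monom_le[of "1::'a" "d*L"] by simp
  qed
  finally show ?case .
qed

lemma card_subfield:
  assumes "prime p" "e > 0" "q = p ^ e" "card (UNIV::'a::{finite,field} set) = q ^ m" "m > 0"
  shows "card (subfield_q q :: 'a set) = q"
proof -
  have p2: "p \<ge> 2" using prime_ge_2_nat assms(1) by blast
  have "p ^ 1 \<le> p ^ e" using assms(2) p2 by (intro power_increasing) auto
  hence q2: "q \<ge> 2" using assms(3) p2 by simp
  define N where "N = q ^ m"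
  define L where "L = (\<Sum>i<m. q ^ i)"
  have NL: "(q - 1) * L = N - 1" unfolding N_def L_def by (rule geom_nat)
  have L1: "L \<ge> 1" unfolding L_def using member_le_sum[of 0 "{..<m}" "\<lambda>i. q^i"] assms(5) by simp
  have "q ^ 1 \<le> q ^ m" using assms(5) q2 by (intro power_increasing) auto
  hence Nq: "N \<ge> q" unfolding N_def by simp
  define P :: "'a poly" where "P = Polynomial.monom 1 q + Polynomial.monom (-1) 1"
  have polyP: "poly P x = x ^ q - x" for x unfolding P_def by (simp add: poly_monom)
  have degP: "degree P = q" unfolding P_def using q2
    by (subst degree_add_eq_left) (simp_all add: degree_monom_eq)
  have P0: "P \<noteq> 0" using degP q2 by auto
  have K: "subfield_q q = {x::'a. poly P x = 0}" unfolding subfield_q_def polyP by auto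
  have le: "card (subfield_q q :: 'a set) \<le> q" using card_poly_roots_bound[OF P0] K degP by simp
  define G :: "'a poly" where "G = (\<Sum>i<L. Polynomial.monom 1 ((q - 1) * i))"
  have polyG: "poly G x = (\<Sum>i<L. (x ^ (q - 1)) ^ i)" for x
    unfolding G_def poly_sum by (simp add: poly_monom power_mult)
  have z: "(0::'a) ^ (q - 1) = 0" using q2 by simp
  have "poly G 0 = (\<Sum>i<L. if i = 0 then (1::'a) else 0)"
    unfolding polyG z by (intro sum.cong) (auto simp: power_0_left)
  also have "\<dots> = 1" using L1 by (subst sum.delta) auto
  finally have "poly G 0 = 1" .
  hence G0: "G \<noteq> 0" by auto
  have e1: "(q - 1) * (L - 1) = N - q"
  proof -
    have "(q - 1) * (L - 1) = (q - 1) * L - (q - 1)" by (simp add: diff_mult_distrib2)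
    thus ?thesis using NL Nq q2 by simp
  qed
  have degG: "degree G \<le> N - q" unfolding G_def
    using degree_geom_poly[where L=L and d="q - 1" and 'a='a] e1 by simp
  have sq: "Suc (q - 1) = q" using q2 by simp
  have sN: "Suc (N - 1) = N" using q2 Nq by simp
  have ident: "x ^ N - x = (x ^ q - x) * poly G x" for x :: 'a
  proof -
    have "x * x ^ (q - 1) = x ^ q" by (metis power_Suc sq)
    hence "(x ^ q - x) = x * (x ^ (q - 1) - 1)" by (simp add: algebra_simps)
    hence "(x ^ q - x) * poly G x = x * ((x ^ (q - 1)) ^ L - 1)"
      unfolding polyG by (simp add: power_diff_1_eq mult.assoc)
    also have "(x ^ (q - 1)) ^ L = x ^ (N - 1)" using NL by (simp add: power_mult[symmetric])
    also have "x * (x ^ (N - 1) - 1) = x ^ N - x" 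
    proof -
      have "x * x ^ (N - 1) = x ^ N" by (metis power_Suc sN)
      thus ?thesis by (simp add: algebra_simps)
    qed
    finally show ?thesis by simp
  qed
  have sub: "UNIV - subfield_q q \<subseteq> {x::'a. poly G x = 0}"
  proof
    fix x :: 'a assume "x \<in> UNIV - subfield_q q"
    hence "x ^ q - x \<noteq> 0" unfolding subfield_q_def by auto
    moreover have "x ^ N - x = 0" using pow_card_same[of x] assms(4) N_def by simp
    ultimately show "x \<in> {x. poly G x = 0}" using ident[of x] by simp
  qed
  have "card (UNIV - subfield_q q :: 'a set) \<le> N - q"
  proof -
    have "card (UNIV - subfield_q q :: 'a set) \<le> card {x::'a. poly G x = 0}"
      by (rule card_mono) (use sub in auto)
    also have "\<dots> \<le> degree G" by (rule card_poly_roots_bound[OF G0])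
    finally show ?thesis using degG by linarith
  qed
  moreover have "card (UNIV - subfield_q q :: 'a set) = N - card (subfield_q q :: 'a set)"
    using assms(4) N_def by (simp add: card_Diff_subset)
  ultimately have "card (subfield_q q :: 'a set) \<ge> q"
    using Nq le by linarith
  with le show ?thesis by simp
qed

definition subf :: "'a::field set \<Rightarrow> bool" where
  "subf K \<longleftrightarrow> 0 \<in> K \<and> 1 \<in> K \<and> (\<forall>x\<in>K. \<forall>y\<in>K. x + y \<in> K \<and> x * y \<in> K \<and> x - y \<in> K)
     \<and> (\<forall>x\<in>K. - x \<in> K \<and> inverse x \<in> K)"

lemma subf_UNIV: "subf UNIV" unfolding subf_def by auto

lemma subfD:
  assumes "subf K"
  shows "0 \<in> K" "1 \<in> K" "x \<in> K \<Longrightarrow> y \<in> K \<Longrightarrow> x + y \<in> K"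
    "x \<in> K \<Longrightarrow> y \<in> K \<Longrightarrow> x * y \<in> K" "x \<in> K \<Longrightarrow> y \<in> K \<Longrightarrow> x - y \<in> K"
    "x \<in> K \<Longrightarrow> - x \<in> K" "x \<in> K \<Longrightarrow> inverse x \<in> K" "x \<in> K \<Longrightarrow> y \<in> K \<Longrightarrow> x / y \<in> K"
  using assms unfolding subf_def by (auto simp: divide_inverse)

lemma subf_sum:
  assumes "subf K" "\<And>i. i \<in> A \<Longrightarrow> f i \<in> K"
  shows "sum f A \<in> K"
  using assms(2)
proof (induction A rule: infinite_finite_induct)
  case (infinite A) thus ?case using subfD(1)[OF assms(1)] by simp
next
  case empty thus ?case using subfD(1)[OF assms(1)] by simp
next
  case (insert x F) thus ?case using subfD(3)[OF assms(1)] by simp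
qed

lemma subf_subfield:
  assumes "prime p" "e > 0" "q = p ^ e" "card (UNIV::'a::{finite,field} set) = q ^ m"
  shows "subf (subfield_q q :: 'a set)"
proof -
  have q0: "q > 0" using assms prime_gt_0_nat by simp
  have fa: "((x::'a) + y) ^ q = x ^ q + y ^ q" for x y
    using frob_add[OF assms(1) _ assms(3), of "e*m"] assms(3,4) by (simp add: power_mult)
  have neg: "(- (x::'a)) ^ q = - (x ^ q)" for x
  proof -
    have "(- x + x) ^ q = (- x) ^ q + x ^ q" by (rule fa)
    thus ?thesis using q0 by (simp add: zero_power eq_neg_iff_add_eq_0)
  qed
  have "(0::'a) ^ q = 0" using q0 by (simp add: zero_power)
  moreover have "x ^ q = x \<Longrightarrow> y ^ q = y \<Longrightarrow> (x + y) ^ q = x + y" for x y :: 'a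
    using fa[of x y] by simp
  moreover have "x ^ q = x \<Longrightarrow> y ^ q = y \<Longrightarrow> (x * y) ^ q = x * y" for x y :: 'a
    by (simp add: power_mult_distrib)
  moreover have "x ^ q = x \<Longrightarrow> (- x) ^ q = - x" for x :: 'a
    using neg[of x] by simp
  moreover have "x ^ q = x \<Longrightarrow> y ^ q = y \<Longrightarrow> (x - y) ^ q = x - y" for x y :: 'a
    using fa[of x "- y"] neg[of y] by simp
  moreover have "x ^ q = x \<Longrightarrow> (inverse x) ^ q = inverse x" for x :: 'a
    by (simp add: power_inverse)
  ultimately show ?thesis unfolding subf_def subfield_q_def by simp
qed

lemma lcomb_Nil [simp]: "lcomb cs [] = (\<lambda>i. 0)"
  unfolding lcomb_def by simp

lemma lcomb_Cons: "lcomb (c # cs) (w # ws) = (\<lambda>i. c * w i + lcomb cs ws i)"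
  unfolding lcomb_def length_Cons sum.lessThan_Suc_shift by simp

lemma lcomb_append:
  "length cs1 = length ws1 \<Longrightarrow>
   lcomb (cs1 @ cs2) (ws1 @ ws2) = (\<lambda>i. lcomb cs1 ws1 i + lcomb cs2 ws2 i)"
proof (induction ws1 arbitrary: cs1)
  case Nil thus ?case by simp
next
  case (Cons w ws1)
  then obtain c cs1' where "cs1 = c # cs1'" "length cs1' = length ws1" by (cases cs1) auto
  thus ?case using Cons by (simp add: lcomb_Cons add.assoc)
qed

lemma lcomb_scale:
  "length cs = length ws \<Longrightarrow> lcomb (map (\<lambda>x. c * x) cs) ws = (\<lambda>i. c * lcomb cs ws i)"
  unfolding lcomb_def by (auto simp: sum_distrib_left mult.assoc intro!: sum.cong)

lemma lcomb_add:
  "length cs = length ws \<Longrightarrow> length ds = length ws \<Longrightarrow>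
   lcomb (map2 (+) cs ds) ws = (\<lambda>i. lcomb cs ws i + lcomb ds ws i)"
  unfolding lcomb_def by (auto simp: sum.distrib algebra_simps intro!: sum.cong)

lemma lcomb_diff:
  "length cs = length ws \<Longrightarrow> length ds = length ws \<Longrightarrow>
   lcomb (map2 (-) cs ds) ws = (\<lambda>i. lcomb cs ws i - lcomb ds ws i)"
  unfolding lcomb_def by (auto simp: sum_subtractf algebra_simps intro!: sum.cong)

lemma lcomb_zero: "lcomb (replicate (length ws) 0) ws = (\<lambda>i. 0)"
  unfolding lcomb_def by (auto intro!: sum.neutral simp: nth_replicate)
  
lemma lcomb_in:
  assumes "vsubspace K T" "set ws \<subseteq> T" "set cs \<subseteq> K" "length cs = length ws"
  shows "lcomb cs ws \<in> T"
  using assms(2-4)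
proof (induction ws arbitrary: cs)
  case Nil thus ?case using assms(1) unfolding vsubspace_def by simp
next
  case (Cons w ws)
  then obtain c cs' where cs: "cs = c # cs'" "length cs' = length ws" by (cases cs) auto
  have "lcomb cs' ws \<in> T" using Cons.IH[of cs'] Cons.prems cs by auto
  moreover have "(\<lambda>i. c * w i) \<in> T" using assms(1) Cons cs unfolding vsubspace_def by auto
  ultimately show ?case unfolding cs lcomb_Cons using assms(1) unfolding vsubspace_def by auto
qed

lemma vspan_sub: "vsubspace K T \<Longrightarrow> S \<subseteq> T \<Longrightarrow> vspan K S \<subseteq> T"
  unfolding vspan_def using lcomb_in by blast

lemma vsubspace_vspan: "subf K \<Longrightarrow> vsubspace K (vspan K S)"
proof -
  assume K: "subf K"
  have "(\<lambda>i. 0) \<in> vspan K S" unfolding vspan_def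
    by (rule CollectI, rule exI[of _ "[]"], rule exI[of _ "[]"]) simp
  moreover have "(\<lambda>i. u i + w i) \<in> vspan K S" if hu: "u \<in> vspan K S" and hw: "w \<in> vspan K S" for u w
  proof -
    obtain us cs where u: "set us \<subseteq> S" "length cs = length us" "set cs \<subseteq> K" "u = lcomb cs us"
      using hu unfolding vspan_def by blast
    obtain ws ds where w: "set ws \<subseteq> S" "length ds = length ws" "set ds \<subseteq> K" "w = lcomb ds ws"
      using hw unfolding vspan_def by blast
    show ?thesis unfolding vspan_def
      by (rule CollectI, rule exI[of _ "us @ ws"], rule exI[of _ "cs @ ds"]) (use u w in \<open>simp add: lcomb_append\<close>)
  qed
  moreover have "(\<lambda>i. c * u i) \<in> vspan K S" if hc: "c \<in> K" and hu: "u \<in> vspan K S" for c u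
  proof -
    obtain us cs where u: "set us \<subseteq> S" "length cs = length us" "set cs \<subseteq> K" "u = lcomb cs us"
      using hu unfolding vspan_def by blast
    show ?thesis unfolding vspan_def
      by (rule CollectI, rule exI[of _ "us"], rule exI[of _ "map (\<lambda>x. c * x) cs"])
        (use u hc subfD(4)[OF K] in \<open>auto simp add: lcomb_scale\<close>)
  qed
  ultimately show ?thesis unfolding vsubspace_def by blast
qed

lemma lcomb_single: "lcomb [1] [v] = v"
  unfolding lcomb_def by simp

lemma in_vspan: "subf K \<Longrightarrow> v \<in> S \<Longrightarrow> v \<in> vspan K S"
  unfolding vspan_def using subfD(2) lcomb_single[symmetric]
  by (intro CollectI exI[of _ "[v]"] exI[of _ "[1]"]) auto

definition lsp :: "(nat \<Rightarrow> 'a::field) list \<Rightarrow> (nat \<Rightarrow> 'a) set" where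
  "lsp ws = (\<lambda>cs. lcomb cs ws) ` {cs. set cs \<subseteq> UNIV \<and> length cs = length ws}"

lemma lspI: "length cs = length ws \<Longrightarrow> lcomb cs ws \<in> lsp ws"
  unfolding lsp_def by auto

lemma lspE: "x \<in> lsp ws \<Longrightarrow> (\<And>cs. length cs = length ws \<Longrightarrow> x = lcomb cs ws \<Longrightarrow> P) \<Longrightarrow> P"
  unfolding lsp_def by auto

lemma vsubspace_lsp: "vsubspace UNIV (lsp ws)"
  unfolding vsubspace_def
proof (intro conjI ballI)
  show "(\<lambda>i. 0) \<in> lsp ws" using lspI[of "replicate (length ws) 0" ws] by (simp only: lcomb_zero length_replicate)
next
  fix u w assume "u \<in> lsp ws" "w \<in> lsp ws"
  then obtain cs ds where "length cs = length ws" "u = lcomb cs ws" "length ds = length ws" "w = lcomb ds ws"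
    by (auto elim!: lspE)
  thus "(\<lambda>i. u i + w i) \<in> lsp ws" using lspI[of "map2 (+) cs ds" ws] lcomb_add[of cs ws ds] by simp
next
  fix c :: 'a and u assume "u \<in> lsp ws"
  then obtain cs where "length cs = length ws" "u = lcomb cs ws" by (auto elim!: lspE)
  thus "(\<lambda>i. c * u i) \<in> lsp ws" using lspI[of "map (\<lambda>x. c * x) cs" ws] lcomb_scale[of cs ws c] by simp
qed

lemma lcomb_unit:
  assumes "k < length ws"
  shows "lcomb (map (\<lambda>j. if j = k then 1 else 0) [0..<length ws]) ws = ws ! k"
proof
  fix i
  have "(\<Sum>j<length ws. map (\<lambda>j. if j = k then 1 else 0) [0..<length ws] ! j * (ws ! j) i)
      = (\<Sum>j<length ws. if j = k then (ws ! j) i else 0)" by (intro sum.cong) auto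
  also have "\<dots> = (ws ! k) i" using assms by (simp add: sum.delta)
  finally show "lcomb (map (\<lambda>j. if j = k then 1 else 0) [0..<length ws]) ws i = (ws ! k) i"
    unfolding lcomb_def .
qed

lemma set_lsp: "set ws \<subseteq> lsp ws"
proof
  fix w assume "w \<in> set ws"
  then obtain k where "k < length ws" "w = ws ! k" by (auto simp: in_set_conv_nth)
  thus "w \<in> lsp ws" using lcomb_unit[of k ws] lspI[of "map (\<lambda>j. if j = k then 1 else 0) [0..<length ws]" ws]
    by simp
qed

lemma lsp_sub: "vsubspace UNIV T \<Longrightarrow> set ws \<subseteq> T \<Longrightarrow> lsp ws \<subseteq> T"
  by (auto elim!: lspE intro: lcomb_in[where K=UNIV])

lemma lsp_vspan: "lsp ws = vspan UNIV (set ws)"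
proof
  show "lsp ws \<subseteq> vspan UNIV (set ws)" unfolding vspan_def by (auto elim!: lspE)
  show "vspan UNIV (set ws) \<subseteq> lsp ws" by (rule vspan_sub[OF vsubspace_lsp set_lsp])
qed

lemma fin_lists: "finite {cs::('a::finite) list. length cs = n}"
  using finite_lists_length_eq[of "UNIV::'a set" n] by simp

lemma card_lists: "card {cs::('a::finite) list. length cs = n} = card (UNIV::'a set) ^ n"
  using card_lists_length_eq[of "UNIV::'a set" n] by simp

lemma finite_lsp: "finite (lsp (ws :: (nat \<Rightarrow> 'a::{finite,field}) list))"
  unfolding lsp_def by (rule finite_imageI) (simp add: fin_lists)

lemma card_lsp_le:
  fixes ws :: "(nat \<Rightarrow> 'a::{finite,field}) list"
  shows "card (lsp ws) \<le> card (UNIV :: 'a set) ^ length ws"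
proof -
  have "card (lsp ws) \<le> card {cs::'a list. set cs \<subseteq> UNIV \<and> length cs = length ws}"
    unfolding lsp_def by (rule card_image_le) (simp add: fin_lists)
  thus ?thesis by (simp add: card_lists)
qed

lemma card_lsp_indep:
  fixes ws :: "(nat \<Rightarrow> 'a::{finite,field}) list"
  assumes "lin_indep UNIV ws"
  shows "card (lsp ws) = card (UNIV :: 'a set) ^ length ws"
proof -
  have "inj_on (\<lambda>cs. lcomb cs ws) {cs::'a list. set cs \<subseteq> UNIV \<and> length cs = length ws}"
  proof (rule inj_onI)
    fix cs ds assume cs: "cs \<in> {cs::'a list. set cs \<subseteq> UNIV \<and> length cs = length ws}"
      and ds: "ds \<in> {cs::'a list. set cs \<subseteq> UNIV \<and> length cs = length ws}"
      and eq: "lcomb cs ws = lcomb ds ws"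
    have "lcomb (map2 (-) cs ds) ws = (\<lambda>i. 0)" using cs ds eq lcomb_diff[of cs ws ds] by simp
    moreover have "length (map2 (-) cs ds) = length ws" using cs ds by simp
    ultimately have "set (map2 (-) cs ds) \<subseteq> {0}" using assms unfolding lin_indep_def by blast
    have lc: "length cs = length ws" "length ds = length ws" using cs ds by auto
    show "cs = ds"
    proof (rule nth_equalityI)
      show "length cs = length ds" using lc by simp
      fix k assume k: "k < length cs"
      hence "map2 (-) cs ds ! k \<in> set (map2 (-) cs ds)" using lc by (intro nth_mem) simp
      hence "map2 (-) cs ds ! k = 0" using \<open>set (map2 (-) cs ds) \<subseteq> {0}\<close> by blast
      moreover have "map2 (-) cs ds ! k = cs ! k - ds ! k" using k lc by simp
      ultimately show "cs ! k = ds ! k" by simp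
    qed
  qed
  hence "card (lsp ws) = card {cs::'a list. set cs \<subseteq> UNIV \<and> length cs = length ws}"
    unfolding lsp_def by (rule card_image)
  thus ?thesis by (simp add: card_lists)
qed

lemma indep_le:
  fixes ws :: "(nat \<Rightarrow> 'a::{finite,field}) list"
  assumes "lin_indep UNIV ws" "lsp ws \<subseteq> lsp B"
  shows "length ws \<le> length B"
proof -
  have "card (lsp ws) \<le> card (lsp B)" by (rule card_mono[OF finite_lsp assms(2)])
  hence 1: "card (UNIV :: 'a set) ^ length ws \<le> card (UNIV :: 'a set) ^ length B"
    using card_lsp_indep[OF assms(1)] card_lsp_le[of B] by linarith
  have "card {0, 1::'a} \<le> card (UNIV :: 'a set)" by (rule card_mono) auto
  hence 2: "1 < card (UNIV :: 'a set)" by simp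
  show ?thesis by (rule power_le_imp_le_exp[OF 2 1])
qed

lemma finite_vecs: "finite (vecs n :: (nat \<Rightarrow> 'a::{finite,field}) set)"
proof -
  have "vecs n \<subseteq> (\<lambda>xs i. if i < n then xs ! i else (0::'a)) ` {xs. length xs = n}"
  proof
    fix v :: "nat \<Rightarrow> 'a" assume v: "v \<in> vecs n"
    have "v = (\<lambda>i. if i < n then map v [0..<n] ! i else 0)"
      using v unfolding vecs_def by (auto simp: fun_eq_iff)
    thus "v \<in> (\<lambda>xs i. if i < n then xs ! i else (0::'a)) ` {xs. length xs = n}"
      by (intro image_eqI[of _ _ "map v [0..<n]"]) auto
  qed
  moreover have "finite ((\<lambda>xs i. if i < n then xs ! i else (0::'a)) ` {xs. length xs = n})"
    by (intro finite_imageI fin_lists)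
  ultimately show ?thesis by (rule finite_subset)
qed

lemma vs_add: "vsubspace K A \<Longrightarrow> u \<in> A \<Longrightarrow> w \<in> A \<Longrightarrow> (\<lambda>i. u i + w i) \<in> A"
  unfolding vsubspace_def by blast
lemma vs_scale: "vsubspace K A \<Longrightarrow> c \<in> K \<Longrightarrow> u \<in> A \<Longrightarrow> (\<lambda>i. c * u i) \<in> A"
  unfolding vsubspace_def by blast
lemma vs_zero: "vsubspace K A \<Longrightarrow> (\<lambda>i. 0) \<in> A"
  unfolding vsubspace_def by blast

lemma lin_indep_Nil: "lin_indep K []"
  unfolding lin_indep_def by simp

lemma lsp_Nil: "lsp [] = {(\<lambda>i. 0)}"
  unfolding lsp_def by auto

lemma galois_basis:
  fixes A :: "(nat \<Rightarrow> 'a::{finite,field}) set"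
  assumes "q > 0" "vsubspace UNIV A" "A \<subseteq> vecs n" "galois_closed q A"
  shows "\<exists>ws. set ws \<subseteq> A \<and> lin_indep UNIV ws \<and> A \<subseteq> lsp ws \<and> (\<forall>w\<in>set ws. \<forall>i. w i ^ q = w i)"
  using assms(2-4)
proof (induction "card A" arbitrary: A rule: less_induct)
  case less
  note sub = less.prems(1)[unfolded vsubspace_def]
  have finA: "finite A" using less.prems(2) finite_vecs finite_subset by blast
  show ?case
  proof (cases "A \<subseteq> {(\<lambda>i. 0)}")
    case True
    thus ?thesis using lin_indep_Nil lsp_Nil by (intro exI[of _ "[]"]) auto
  next
    case False
    then obtain a where a: "a \<in> A" "a \<noteq> (\<lambda>i. 0)" by auto
    obtain a0 where a0: "a0 \<in> A \<and> a0 \<noteq> (\<lambda>i. 0)"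
      and a0min: "\<And>y. y \<in> A \<and> y \<noteq> (\<lambda>i. 0) \<Longrightarrow> card {i. a0 i \<noteq> 0} \<le> card {i. y i \<noteq> 0}"
      using ex_has_least_nat[of "\<lambda>x. x \<in> A \<and> x \<noteq> (\<lambda>i. 0)" a "\<lambda>x. card {i. x i \<noteq> 0}"] a by blast
    obtain j where j: "a0 j \<noteq> 0" using a0 by auto
    define w where "w = (\<lambda>i. inverse (a0 j) * a0 i)"
    have wA: "w \<in> A" unfolding w_def using vs_scale[OF less.prems(1) _ conjunct1[OF a0]] by blast
    have wj: "w j = 1" unfolding w_def using j by simp
    have suppw: "{i. w i \<noteq> 0} = {i. a0 i \<noteq> 0}" unfolding w_def using j by auto
    have fin_supp: "finite {i. a0 i \<noteq> 0}"
    proof -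
      have "{i. a0 i \<noteq> 0} \<subseteq> {..<n}" using a0 less.prems(2) unfolding vecs_def
        by (auto simp: not_less[symmetric])
      thus ?thesis by (rule finite_subset) simp
    qed
    define b where "b = (\<lambda>i. w i ^ q + (-1) * w i)"
    have bA: "b \<in> A"
    proof -
      have "(\<lambda>i. w i ^ q) \<in> A" using less.prems(3) wA unfolding galois_closed_def by blast
      moreover have "(\<lambda>i. (-1) * w i) \<in> A" using vs_scale[OF less.prems(1) _ wA] by blast
      ultimately show ?thesis unfolding b_def using vs_add[OF less.prems(1)] by blast
    qed
    have wK: "\<forall>i. w i ^ q = w i"
    proof (rule ccontr)
      assume "\<not> (\<forall>i. w i ^ q = w i)"
      hence bnz: "b \<noteq> (\<lambda>i. 0)" unfolding b_def by (auto simp: fun_eq_iff)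
      have sb: "{i. b i \<noteq> 0} \<subseteq> {i. a0 i \<noteq> 0} - {j}"
      proof
        fix i assume "i \<in> {i. b i \<noteq> 0}"
        hence bi: "b i \<noteq> 0" by simp
        have "w i \<noteq> 0"
        proof
          assume "w i = 0" hence "b i = 0" unfolding b_def using assms(1) by (simp add: zero_power)
          with bi show False by simp
        qed
        hence "a0 i \<noteq> 0" using suppw by blast
        moreover have "i \<noteq> j"
        proof
          assume "i = j" hence "b i = 0" unfolding b_def using wj by simp
          with bi show False by simp
        qed
        ultimately show "i \<in> {i. a0 i \<noteq> 0} - {j}" by simp
      qed
      have "{i. b i \<noteq> 0} \<subset> {i. a0 i \<noteq> 0}" using sb j by blast
      hence "card {i. b i \<noteq> 0} < card {i. a0 i \<noteq> 0}" by (rule psubset_card_mono[OF fin_supp])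
      with a0min[of b] bA bnz show False by simp
    qed
    define A' where "A' = {x \<in> A. x j = 0}"
    have subA': "vsubspace UNIV A'" unfolding A'_def vsubspace_def using sub by auto
    have A'v: "A' \<subseteq> vecs n" unfolding A'_def using less.prems(2) by auto
    have galA': "galois_closed q A'" unfolding A'_def galois_closed_def
      using less.prems(3) assms(1) unfolding galois_closed_def by (auto simp: zero_power)
    have "A' \<subseteq> A" unfolding A'_def by blast
    moreover have "w \<notin> A'" unfolding A'_def using wj by simp
    ultimately have "A' \<subset> A" using wA by blast
    hence "card A' < card A" by (rule psubset_card_mono[OF finA])
    from less.hyps[OF this subA' A'v galA'] obtain ws' where
      ws': "set ws' \<subseteq> A'" "lin_indep UNIV ws'" "A' \<subseteq> lsp ws'" "\<forall>w\<in>set ws'. \<forall>i. w i ^ q = w i"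
      by blast
    have lj: "lcomb cs' ws' j = 0" if "length cs' = length ws'" for cs'
    proof -
      have "lcomb cs' ws' \<in> A'" by (rule lcomb_in[OF subA' ws'(1)]) (use that in auto)
      thus ?thesis unfolding A'_def by simp
    qed
    have ind: "lin_indep UNIV (w # ws')"
      unfolding lin_indep_def
    proof (intro allI impI)
      fix cs :: "'a list" assume h: "length cs = length (w # ws') \<and> set cs \<subseteq> UNIV \<and> lcomb cs (w # ws') = (\<lambda>i. 0)"
      then obtain c cs' where cs: "cs = c # cs'" "length cs' = length ws'" by (cases cs) auto
      have eq: "(\<lambda>i. c * w i + lcomb cs' ws' i) = (\<lambda>i. 0)" using h cs lcomb_Cons by metis
      hence "c * w j + lcomb cs' ws' j = 0" by metis
      hence c0: "c = 0" using wj lj[OF cs(2)] by simp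
      hence "lcomb cs' ws' = (\<lambda>i. 0)" using eq by (simp add: fun_eq_iff)
      hence "set cs' \<subseteq> {0}" using ws'(2) cs(2) unfolding lin_indep_def by blast
      thus "set cs \<subseteq> {0}" using c0 cs by simp
    qed
    have span: "A \<subseteq> lsp (w # ws')"
    proof
      fix x assume xA: "x \<in> A"
      define x' where "x' = (\<lambda>i. x i + (- x j) * w i)"
      have "x' \<in> A" unfolding x'_def using vs_add[OF less.prems(1) xA vs_scale[OF less.prems(1) _ wA]] by blast
      moreover have "x' j = 0" unfolding x'_def using wj by simp
      ultimately have "x' \<in> lsp ws'" using ws'(3) unfolding A'_def by blast
      then obtain cs' where cs': "length cs' = length ws'" "x' = lcomb cs' ws'" by (rule lspE)
      have "lcomb (x j # cs') (w # ws') = x"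
        unfolding lcomb_Cons using cs'(2)[symmetric] by (simp add: x'_def fun_eq_iff)
      thus "x \<in> lsp (w # ws')" using lspI[of "x j # cs'" "w # ws'"] cs'(1) by simp
    qed
    show ?thesis
      using wA ws' ind span wK unfolding A'_def by (intro exI[of _ "w # ws'"]) auto
  qed
qed

lemma vdim_basis:
  fixes A :: "(nat \<Rightarrow> 'a::{finite,field}) set"
  assumes "vsubspace UNIV A" "A \<subseteq> vecs n"
  shows "\<exists>B. length B = vdim UNIV A \<and> lin_indep UNIV B \<and> set B \<subseteq> A \<and> A \<subseteq> lsp B"
proof -
  have "galois_closed 1 A" unfolding galois_closed_def by simp
  from galois_basis[OF _ assms this] obtain ws where
    ws: "set ws \<subseteq> A" "lin_indep UNIV ws" "A \<subseteq> lsp ws" by auto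
  have "lsp ws = A" using ws lsp_sub[OF assms(1) ws(1)] by auto
  hence "vspan UNIV (set ws) = A" by (simp add: lsp_vspan)
  hence ex: "\<exists>vs. length vs = length ws \<and> lin_indep UNIV vs \<and> set vs \<subseteq> A \<and> vspan UNIV (set vs) = A"
    using ws by blast
  have "\<exists>vs. length vs = vdim UNIV A \<and> lin_indep UNIV vs \<and> set vs \<subseteq> A \<and> vspan UNIV (set vs) = A"
    unfolding vdim_def by (rule LeastI_ex) (use ex in blast)
  then obtain B where B: "length B = vdim UNIV A" "lin_indep UNIV B" "set B \<subseteq> A" "vspan UNIV (set B) = A"
    by blast
  thus ?thesis by (intro exI[of _ B]) (simp add: lsp_vspan)
qed

lemma sindep_Nil: "sindep K []"
  unfolding sindep_def by simp

lemma repr_step: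
  fixes N :: nat and v :: "nat \<Rightarrow> 'a::field"
  assumes K: "subf K"
  shows "\<exists>uu M. sindep K uu \<and> set uu \<subseteq> v ` {..<N} \<and> (\<forall>i j. M i j \<in> K)
     \<and> (\<forall>i j. (i \<ge> length uu \<or> j \<ge> N) \<longrightarrow> M i j = 0)
     \<and> (\<forall>j<N. v j = (\<Sum>i<length uu. uu ! i * M i j))"
proof (induction N)
  case 0
  show ?case
    by (rule exI[of _ "[]"], rule exI[of _ "\<lambda>i j. 0"]) (use sindep_Nil subfD(1)[OF K] in auto)
next
  case (Suc N)
  then obtain uu M where IH: "sindep K uu" "set uu \<subseteq> v ` {..<N}" "\<forall>i j. M i j \<in> K"
     "\<forall>i j. (i \<ge> length uu \<or> j \<ge> N) \<longrightarrow> M i j = 0"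
     "\<forall>j<N. v j = (\<Sum>i<length uu. uu ! i * M i j)" by blast
  define r where "r = length uu"
  show ?case
  proof (cases "\<exists>cs. length cs = r \<and> set cs \<subseteq> K \<and> v N = (\<Sum>i<r. cs ! i * uu ! i)")
    case True
    then obtain cs where cs: "length cs = r" "set cs \<subseteq> K" "v N = (\<Sum>i<r. cs ! i * uu ! i)" by blast
    define M' where "M' = (\<lambda>i j. if j = N then (if i < r then cs ! i else 0) else M i j)"
    have "\<forall>i j. M' i j \<in> K" unfolding M'_def using IH(3) cs(1,2) subfD(1)[OF K]
      by (auto dest: nth_mem)
    moreover have "\<forall>i j. (i \<ge> r \<or> j \<ge> Suc N) \<longrightarrow> M' i j = 0"
      unfolding M'_def using IH(4) r_def by auto
    moreover have "\<forall>j<Suc N. v j = (\<Sum>i<r. uu ! i * M' i j)"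
    proof (intro allI impI)
      fix j assume j: "j < Suc N"
      show "v j = (\<Sum>i<r. uu ! i * M' i j)"
      proof (cases "j = N")
        case True
        thus ?thesis unfolding M'_def using cs(3) by (simp add: mult.commute)
      next
        case False
        thus ?thesis unfolding M'_def using IH(5) j r_def by simp
      qed
    qed
    moreover have "set uu \<subseteq> v ` {..<Suc N}" using IH(2) by auto
    ultimately show ?thesis using IH(1) r_def by blast
  next
    case False
    define uu' where "uu' = uu @ [v N]"
    define M' where "M' = (\<lambda>i j. if i = r \<and> j = N then 1 else M i j)"
    have len: "length uu' = Suc r" unfolding uu'_def r_def by simp
    have nth1: "i < r \<Longrightarrow> uu' ! i = uu ! i" for i unfolding uu'_def r_def by (simp add: nth_append)
    have nth2: "uu' ! r = v N" unfolding uu'_def r_def by simp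
    have ind: "sindep K uu'"
      unfolding sindep_def
    proof (intro allI impI)
      fix cs :: "'a list"
      assume h: "length cs = length uu' \<and> set cs \<subseteq> K \<and> (\<Sum>j<length uu'. cs ! j * uu' ! j) = 0"
      have csK: "i < Suc r \<Longrightarrow> cs ! i \<in> K" for i using h len by (auto dest: nth_mem)
      have "(\<Sum>j<length uu'. cs ! j * uu' ! j) = (\<Sum>j<r. cs ! j * uu ! j) + cs ! r * v N"
        unfolding len by (simp add: nth1 nth2)
      hence S: "(\<Sum>j<r. cs ! j * uu ! j) + cs ! r * v N = 0" using h by simp
      have cr: "cs ! r = 0"
      proof (rule ccontr)
        assume c: "cs ! r \<noteq> 0"
        have "v N = - (\<Sum>j<r. cs ! j * uu ! j) / cs ! r" using S c by (simp add: field_simps eq_neg_iff_add_eq_0)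
        also have "\<dots> = (\<Sum>i<r. map (\<lambda>i. - (cs ! i) / cs ! r) [0..<r] ! i * uu ! i)"
          by (simp add: sum_divide_distrib sum_negf[symmetric])
        finally have "v N = (\<Sum>i<r. map (\<lambda>i. - (cs ! i) / cs ! r) [0..<r] ! i * uu ! i)" .
        moreover have "set (map (\<lambda>i. - (cs ! i) / cs ! r) [0..<r]) \<subseteq> K"
          using csK subfD(6,8)[OF K] by auto
        ultimately show False using False by (metis length_map length_upt minus_nat.diff_0)
      qed
      hence "(\<Sum>j<r. cs ! j * uu ! j) = 0" using S by simp
      hence "(\<Sum>j<length uu. take r cs ! j * uu ! j) = 0" unfolding r_def[symmetric] by simp
      moreover have "length (take r cs) = length uu" using h len r_def by simp
      moreover have "set (take r cs) \<subseteq> K" using h by (meson order_trans set_take_subset)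
      ultimately have "set (take r cs) \<subseteq> {0}" using IH(1) unfolding sindep_def by blast
      hence "i < r \<Longrightarrow> cs ! i = 0" for i using h len by (auto simp: set_conv_nth)
      hence "i < Suc r \<Longrightarrow> cs ! i = 0" for i using cr by (cases "i = r") auto
      thus "set cs \<subseteq> {0}" using h len by (auto simp: set_conv_nth)
    qed
    have "\<forall>i j. M' i j \<in> K" unfolding M'_def using IH(3) subfD(2)[OF K] by auto
    moreover have "\<forall>i j. (i \<ge> length uu' \<or> j \<ge> Suc N) \<longrightarrow> M' i j = 0"
      unfolding M'_def len using IH(4) r_def by auto
    moreover have "\<forall>j<Suc N. v j = (\<Sum>i<length uu'. uu' ! i * M' i j)"
    proof (intro allI impI)
      fix j assume j: "j < Suc N"
      have e: "(\<Sum>i<length uu'. uu' ! i * M' i j) = (\<Sum>i<r. uu ! i * M' i j) + v N * M' r j"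
        unfolding len by (simp add: nth1 nth2)
      show "v j = (\<Sum>i<length uu'. uu' ! i * M' i j)"
      proof (cases "j = N")
        case True
        have "(\<Sum>i<r. uu ! i * M' i j) = 0" unfolding M'_def using True IH(4) by simp
        thus ?thesis using e True unfolding M'_def by simp
      next
        case False
        have "(\<Sum>i<r. uu ! i * M' i j) = (\<Sum>i<r. uu ! i * M i j)" unfolding M'_def using False by simp
        moreover have "M' r j = 0" unfolding M'_def using False IH(4) r_def by simp
        ultimately show ?thesis using e IH(5) j False r_def by simp
      qed
    qed
    moreover have "set uu' \<subseteq> v ` {..<Suc N}" using IH(2) unfolding uu'_def by auto
    ultimately show ?thesis using ind by blast
  qed
qed

lemma sspan_mono: "S \<subseteq> T \<Longrightarrow> sspan K S \<subseteq> sspan K T"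
  unfolding sspan_def by blast

lemma choose_idx:
  fixes v :: "nat \<Rightarrow> 'a" and n :: nat
  assumes "set us \<subseteq> v ` {..<n}"
  obtains J where "\<forall>k<length us. J k < n \<and> us ! k = v (J k)"
proof -
  have "\<forall>k. \<exists>j. k < length us \<longrightarrow> j < n \<and> us ! k = v j"
    using assms by (metis imageE lessThan_iff nth_mem subsetD)
  then obtain J where "\<forall>k. k < length us \<longrightarrow> J k < n \<and> us ! k = v (J k)" by metis
  thus ?thesis using that by blast
qed

lemma repr_exists:
  assumes K: "subf K"
  shows "\<exists>uu M. supp_repr K n v uu M"
proof -
  obtain uu M where R: "sindep K uu" "set uu \<subseteq> v ` {..<n}" "\<forall>i j. M i j \<in> K"
     "\<forall>i j. (i \<ge> length uu \<or> j \<ge> n) \<longrightarrow> M i j = 0"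
     "\<forall>j<n. v j = (\<Sum>i<length uu. uu ! i * M i j)"
    using repr_step[OF K, of v n] by blast
  define r where "r = length uu"
  have "sspan K (v ` {..<n}) \<subseteq> sspan K (set uu)"
  proof
    fix x assume "x \<in> sspan K (v ` {..<n})"
    then obtain us cs where x: "set us \<subseteq> v ` {..<n}" "length cs = length us" "set cs \<subseteq> K"
      "x = (\<Sum>k<length us. cs ! k * us ! k)" unfolding sspan_def by blast
    obtain J where J: "\<forall>k<length us. J k < n \<and> us ! k = v (J k)" using choose_idx[OF x(1)] by blast
    define cs' where "cs' = map (\<lambda>i. \<Sum>k<length us. cs ! k * M i (J k)) [0..<r]"
    have "x = (\<Sum>k<length us. cs ! k * (\<Sum>i<r. uu ! i * M i (J k)))"
      unfolding x(4) r_def using J R(5) by (intro sum.cong) auto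
    also have "\<dots> = (\<Sum>k<length us. \<Sum>i<r. cs ! k * M i (J k) * uu ! i)"
      by (simp add: sum_distrib_left mult_ac)
    also have "\<dots> = (\<Sum>i<r. \<Sum>k<length us. cs ! k * M i (J k) * uu ! i)" by (rule sum.swap)
    also have "\<dots> = (\<Sum>i<r. cs' ! i * uu ! i)"
      unfolding cs'_def by (simp add: sum_distrib_right)
    finally have "x = (\<Sum>i<length uu. cs' ! i * uu ! i)" unfolding r_def .
    moreover have "set cs' \<subseteq> K"
    proof -
      have csK: "k < length us \<Longrightarrow> cs ! k \<in> K" for k using x(2,3) nth_mem[of k cs] by auto
      have "(\<Sum>k<length us. cs ! k * M i (J k)) \<in> K" for i
        by (rule subf_sum[OF K]) (use csK R(3) subfD(4)[OF K] in auto)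
      thus ?thesis unfolding cs'_def by auto
    qed
    moreover have "length cs' = length uu" unfolding cs'_def r_def by simp
    ultimately show "x \<in> sspan K (set uu)" unfolding sspan_def by blast
  qed
  moreover have "sspan K (set uu) \<subseteq> sspan K (v ` {..<n})" by (rule sspan_mono[OF R(2)])
  ultimately have "sspan K (set uu) = sspan K (v ` {..<n})" by blast
  thus ?thesis using R unfolding supp_repr_def by blast
qed

lemma group_sum:
  fixes L n :: nat and J :: "nat \<Rightarrow> nat"
  assumes "\<forall>k<L. J k < n"
  shows "(\<Sum>k<L. c k * g (J k)) = (\<Sum>j<n. (\<Sum>k\<in>{k\<in>{..<L}. J k = j}. c k) * (g j :: 'a::comm_ring_1))"
proof -
  have e: "(\<Sum>k\<in>{k\<in>{..<L}. J k = j}. c k) * g j = (\<Sum>k<L. if J k = j then c k * g j else 0)" for j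
  proof -
    have "(\<Sum>k<L. if J k = j then c k * g j else 0) = (\<Sum>k<L. (if J k = j then c k else 0) * g j)"
      by (intro sum.cong) auto
    also have "\<dots> = (\<Sum>k<L. if J k = j then c k else 0) * g j" by (simp add: sum_distrib_right)
    also have "(\<Sum>k<L. if J k = j then c k else 0) = (\<Sum>k\<in>{k\<in>{..<L}. J k = j}. c k)"
      by (rule sum.inter_filter[OF finite_lessThan, symmetric])
    finally show ?thesis by simp
  qed
  have "(\<Sum>j<n. (\<Sum>k\<in>{k\<in>{..<L}. J k = j}. c k) * g j) = (\<Sum>j<n. \<Sum>k<L. if J k = j then c k * g j else 0)"
    using e by simp
  also have "\<dots> = (\<Sum>k<L. \<Sum>j<n. if J k = j then c k * g j else 0)" by (rule sum.swap)
  also have "\<dots> = (\<Sum>k<L. c k * g (J k))"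
    using assms by (intro sum.cong) (auto simp: sum.delta)
  finally show ?thesis by simp
qed

lemma sspan_fun:
  fixes v :: "nat \<Rightarrow> 'a::field" and n :: nat
  assumes K: "subf K" and x: "x \<in> sspan K (v ` {..<n})"
  shows "\<exists>y. (\<forall>j. y j \<in> K) \<and> x = (\<Sum>j<n. y j * v j)"
proof -
  obtain us cs where h: "set us \<subseteq> v ` {..<n}" "length cs = length us" "set cs \<subseteq> K"
    "x = (\<Sum>k<length us. cs ! k * us ! k)" using x unfolding sspan_def by blast
  obtain J where J: "\<forall>k<length us. J k < n \<and> us ! k = v (J k)" using choose_idx[OF h(1)] by blast
  have "x = (\<Sum>k<length us. cs ! k * v (J k))" unfolding h(4) using J by (intro sum.cong) auto
  also have "\<dots> = (\<Sum>j<n. (\<Sum>k\<in>{k\<in>{..<length us}. J k = j}. cs ! k) * v j)"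
    using group_sum[where L="length us" and J=J and n=n and c="\<lambda>k. cs ! k" and g=v] J by simp
  finally show ?thesis
    using h(2,3) by (intro exI[of _ "\<lambda>j. \<Sum>k\<in>{k\<in>{..<length us}. J k = j}. cs ! k"])
      (auto intro!: subf_sum[OF K] dest: nth_mem)
qed

definition dotp :: "nat \<Rightarrow> (nat \<Rightarrow> 'a::field) \<Rightarrow> (nat \<Rightarrow> 'a) \<Rightarrow> 'a" where
  "dotp n v y = (\<Sum>j<n. v j * y j)"

definition Sdef :: "'a::field set \<Rightarrow> nat \<Rightarrow> (nat \<Rightarrow> 'a) \<Rightarrow> (nat \<Rightarrow> 'a) set" where
  "Sdef K n v = {x. (\<forall>j. x j \<in> K) \<and> (\<forall>j. j \<ge> n \<longrightarrow> x j = 0)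
     \<and> (\<forall>y. (\<forall>j. y j \<in> K) \<longrightarrow> dotp n v y = 0 \<longrightarrow> dotp n x y = 0)}"

lemma S1:
  assumes K: "subf K" and R: "supp_repr K n v uu M" and i: "i < length uu"
  shows "(\<lambda>j. M i j) \<in> Sdef K n v"
proof -
  note R' = R[unfolded supp_repr_def]
  have "dotp n (\<lambda>j. M i j) y = 0" if y: "\<forall>j. y j \<in> K" and d: "dotp n v y = 0" for y
  proof -
    define cs where "cs = map (\<lambda>l. \<Sum>j<n. M l j * y j) [0..<length uu]"
    have "dotp n v y = (\<Sum>j<n. (\<Sum>l<length uu. uu ! l * M l j) * y j)"
      unfolding dotp_def using R' by (intro sum.cong) auto
    also have "\<dots> = (\<Sum>j<n. \<Sum>l<length uu. (M l j * y j) * uu ! l)"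
      by (simp add: sum_distrib_right sum_distrib_left mult_ac)
    also have "\<dots> = (\<Sum>l<length uu. \<Sum>j<n. (M l j * y j) * uu ! l)" by (rule sum.swap)
    also have "\<dots> = (\<Sum>l<length uu. cs ! l * uu ! l)" unfolding cs_def by (simp add: sum_distrib_right)
    finally have "(\<Sum>l<length uu. cs ! l * uu ! l) = 0" using d by simp
    moreover have "set cs \<subseteq> K" unfolding cs_def using R' y
      by (auto intro!: subf_sum[OF K] subfD(4)[OF K])
    moreover have "length cs = length uu" unfolding cs_def by simp
    ultimately have "set cs \<subseteq> {0}" using R' unfolding sindep_def by blast
    moreover have "cs ! i \<in> set cs" using i unfolding cs_def by (intro nth_mem) simp
    ultimately have "cs ! i = 0" by blast
    thus ?thesis unfolding cs_def dotp_def using i by simp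
  qed
  thus ?thesis unfolding Sdef_def using R' by auto
qed

lemma S2:
  assumes K: "subf K" and R: "supp_repr K n v uu M" and x: "x \<in> Sdef K n v"
  shows "x \<in> vspan K {(\<lambda>j. M i j) | i. i < length uu}"
proof -
  note R' = R[unfolded supp_repr_def]
  define r where "r = length uu"
  have "\<forall>i. \<exists>y. i < r \<longrightarrow> (\<forall>j. y j \<in> K) \<and> uu ! i = (\<Sum>j<n. y j * v j)"
  proof (intro allI)
    fix i
    show "\<exists>y. i < r \<longrightarrow> (\<forall>j. y j \<in> K) \<and> uu ! i = (\<Sum>j<n. y j * v j)"
    proof (cases "i < r")
      case True
      have "uu ! i \<in> sspan K (set uu)" unfolding sspan_def
        using True r_def subfD(2)[OF K]
        by (intro CollectI exI[of _ "[uu ! i]"] exI[of _ "[1]"]) auto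
      hence "uu ! i \<in> sspan K (v ` {..<n})" using R' by simp
      thus ?thesis using sspan_fun[OF K] by blast
    qed simp
  qed
  then obtain Y where Y: "\<forall>i. i < r \<longrightarrow> (\<forall>j. Y i j \<in> K) \<and> uu ! i = (\<Sum>j<n. Y i j * v j)"
    by metis
  define c where "c i = (\<Sum>j<n. Y i j * x j)" for i
  have xK: "\<forall>j. x j \<in> K" and x0: "\<forall>j. j \<ge> n \<longrightarrow> x j = 0"
    and xrel: "\<forall>y. (\<forall>j. y j \<in> K) \<longrightarrow> dotp n v y = 0 \<longrightarrow> dotp n x y = 0"
    using x unfolding Sdef_def by auto
  have cK: "i < r \<Longrightarrow> c i \<in> K" for i
    unfolding c_def using Y xK by (auto intro!: subf_sum[OF K] subfD(4)[OF K])
  have claim: "x l = (\<Sum>i<r. c i * M i l)" if l: "l < n" for l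
  proof -
    define z where "z j = (\<Sum>i<r. M i l * Y i j) - (if j = l then 1 else 0)" for j
    have zK: "\<forall>j. z j \<in> K" unfolding z_def using Y R' subfD(1,2)[OF K]
      by (auto intro!: subfD(5)[OF K] subf_sum[OF K] subfD(4)[OF K])
    have gen: "(\<Sum>j<n. f j * z j) = (\<Sum>i<r. M i l * (\<Sum>j<n. Y i j * f j)) - f l" for f
    proof -
      have "(\<Sum>j<n. f j * z j) = (\<Sum>j<n. f j * (\<Sum>i<r. M i l * Y i j)) - (\<Sum>j<n. f j * (if j = l then 1 else 0))"
        unfolding z_def by (simp add: right_diff_distrib sum_subtractf)
      also have "(\<Sum>j<n. f j * (if j = l then 1 else 0)) = f l" using l
        by (simp add: if_distrib sum.delta cong: if_cong)
      also have "(\<Sum>j<n. f j * (\<Sum>i<r. M i l * Y i j)) = (\<Sum>j<n. \<Sum>i<r. M i l * (Y i j * f j))"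
        by (simp add: sum_distrib_left mult_ac)
      also have "\<dots> = (\<Sum>i<r. \<Sum>j<n. M i l * (Y i j * f j))" by (rule sum.swap)
      also have "\<dots> = (\<Sum>i<r. M i l * (\<Sum>j<n. Y i j * f j))" by (simp add: sum_distrib_left)
      finally show ?thesis .
    qed
    have "dotp n v z = (\<Sum>i<r. M i l * uu ! i) - v l"
      unfolding dotp_def gen using Y by simp
    also have "\<dots> = 0" using R' l r_def by (simp add: mult.commute)
    finally have "dotp n x z = 0" using xrel zK by blast
    hence "(\<Sum>i<r. M i l * c i) - x l = 0" unfolding dotp_def gen c_def .
    thus ?thesis by (simp add: mult.commute)
  qed
  define rowsl where "rowsl = map (\<lambda>i j. M i j) [0..<r]"
  define cs where "cs = map c [0..<r]"
  have "x = lcomb cs rowsl"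
  proof
    fix l
    show "x l = lcomb cs rowsl l"
    proof (cases "l < n")
      case True thus ?thesis unfolding lcomb_def cs_def rowsl_def using claim by simp
    next
      case False thus ?thesis unfolding lcomb_def cs_def rowsl_def using x0 R' r_def by simp
    qed
  qed
  moreover have "set rowsl \<subseteq> {(\<lambda>j. M i j) | i. i < length uu}" unfolding rowsl_def r_def by auto
  moreover have "set cs \<subseteq> K" unfolding cs_def using cK by auto
  moreover have "length cs = length rowsl" unfolding cs_def rowsl_def by simp
  ultimately show ?thesis unfolding vspan_def by blast
qed

lemma RS:
  assumes K: "subf K"
  shows "\<exists>uu M. supp_repr K n v uu M \<and> rank_supp K n v = vspan K {(\<lambda>j. M i j) | i. i < length uu}"
proof -
  define P where "P = (SOME p. supp_repr K n v (fst p) (snd p))"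
  have "\<exists>p. supp_repr K n v (fst p) (snd p)" using repr_exists[OF K, of n v] by auto
  hence "supp_repr K n v (fst P) (snd P)" unfolding P_def by (rule someI_ex)
  moreover have "rank_supp K n v = vspan K {(\<lambda>j. snd P i j) | i. i < length (fst P)}"
    unfolding rank_supp_def P_def[symmetric] by (cases P) simp
  ultimately show ?thesis by blast
qed

lemma supp_mono:
  assumes K: "subf K" and rel: "\<forall>y. (\<forall>j. y j \<in> K) \<longrightarrow> dotp n c y = 0 \<longrightarrow> dotp n v y = 0"
  shows "rank_supp K n v \<subseteq> rank_supp K n c"
proof -
  obtain uu M where A: "supp_repr K n v uu M" "rank_supp K n v = vspan K {(\<lambda>j. M i j) | i. i < length uu}"
    using RS[OF K] by blast
  obtain uu' M' where B: "supp_repr K n c uu' M'" "rank_supp K n c = vspan K {(\<lambda>j. M' i j) | i. i < length uu'}"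
    using RS[OF K] by blast
  have "{(\<lambda>j. M i j) | i. i < length uu} \<subseteq> rank_supp K n c"
  proof
    fix x assume "x \<in> {(\<lambda>j. M i j) | i. i < length uu}"
    then obtain i where i: "i < length uu" "x = (\<lambda>j. M i j)" by blast
    have "x \<in> Sdef K n v" using S1[OF K A(1) i(1)] i(2) by simp
    hence "x \<in> Sdef K n c" using rel unfolding Sdef_def by auto
    thus "x \<in> rank_supp K n c" using S2[OF K B(1)] B(2) by simp
  qed
  thus ?thesis unfolding A(2) B(2) by (rule vspan_sub[OF vsubspace_vspan[OF K]])
qed

lemma vsubspace_Int: "vsubspace K A \<Longrightarrow> vsubspace K B \<Longrightarrow> vsubspace K (A \<inter> B)"
  unfolding vsubspace_def by blast

lemma vsubspace_UNIV_K: "vsubspace UNIV A \<Longrightarrow> vsubspace K A"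
  unfolding vsubspace_def by blast

lemma vsubspace_vecs: "vsubspace UNIV (vecs n)"
  unfolding vsubspace_def vecs_def by auto

lemma dotp_lcomb:
  "dotp n (lcomb cs ws) y = (\<Sum>i<length ws. cs ! i * dotp n (ws ! i) y)"
proof -
  have "dotp n (lcomb cs ws) y = (\<Sum>j<n. \<Sum>i<length ws. cs ! i * ((ws ! i) j * y j))"
    unfolding dotp_def lcomb_def by (simp add: sum_distrib_right sum_distrib_left mult_ac)
  also have "\<dots> = (\<Sum>i<length ws. \<Sum>j<n. cs ! i * ((ws ! i) j * y j))" by (rule sum.swap)
  also have "\<dots> = (\<Sum>i<length ws. cs ! i * dotp n (ws ! i) y)"
    unfolding dotp_def by (simp add: sum_distrib_left)
  finally show ?thesis .
qed

lemma dotp_lin: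
  "dotp n (\<lambda>i. a * v1 i + b * v2 i) y = a * dotp n v1 y + b * dotp n v2 y"
  unfolding dotp_def by (simp add: sum.distrib sum_distrib_left algebra_simps)

lemma dotp_scale: "dotp n (\<lambda>i. c * v i) y = c * dotp n v y"
  unfolding dotp_def by (simp add: sum_distrib_left mult_ac)

lemma sindep_len:
  fixes uu :: "'a::{finite,field} list"
  assumes K: "subf K" and ind: "sindep K uu"
  shows "card K ^ length uu \<le> card (UNIV :: 'a set)"
proof -
  define D where "D = {cs. set cs \<subseteq> K \<and> length cs = length uu}"
  define f where "f cs = (\<Sum>j<length uu. cs ! j * uu ! j)" for cs
  have "inj_on f D"
  proof (rule inj_onI)
    fix cs ds assume cs: "cs \<in> D" and ds: "ds \<in> D" and eq: "f cs = f ds"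
    have lc: "length cs = length uu" "length ds = length uu" using cs ds unfolding D_def by auto
    have "(\<Sum>j<length uu. map2 (-) cs ds ! j * uu ! j) = f cs - f ds"
      unfolding f_def using lc by (simp add: sum_subtractf left_diff_distrib)
    hence z: "(\<Sum>j<length uu. map2 (-) cs ds ! j * uu ! j) = 0" using eq by simp
    have "set (map2 (-) cs ds) \<subseteq> K"
    proof
      fix x assume "x \<in> set (map2 (-) cs ds)"
      then obtain k where k: "k < length uu" "x = cs ! k - ds ! k" using lc by (auto simp: set_conv_nth)
      have "cs ! k \<in> set cs" "ds ! k \<in> set ds" using k(1) lc by simp_all
      hence "cs ! k \<in> K" "ds ! k \<in> K" using cs ds unfolding D_def by auto
      thus "x \<in> K" using k(2) subfD(5)[OF K] by simp
    qed
    moreover have "length (map2 (-) cs ds) = length uu" using lc by simp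
    ultimately have "set (map2 (-) cs ds) \<subseteq> {0}" using ind z unfolding sindep_def by blast
    show "cs = ds"
    proof (rule nth_equalityI)
      show "length cs = length ds" using lc by simp
      fix k assume k: "k < length cs"
      hence "map2 (-) cs ds ! k \<in> set (map2 (-) cs ds)" using lc by (intro nth_mem) simp
      hence "map2 (-) cs ds ! k = 0" using \<open>set (map2 (-) cs ds) \<subseteq> {0}\<close> by blast
      thus "cs ! k = ds ! k" using k lc by simp
    qed
  qed
  hence "card (f ` D) = card D" by (rule card_image)
  moreover have "card D = card K ^ length uu" unfolding D_def
    by (rule card_lists_length_eq) simp
  moreover have "card (f ` D) \<le> card (UNIV :: 'a set)" by (rule card_mono) auto
  ultimately show ?thesis by simp
qed

lemma lcomb_rows:
  assumes R: "supp_repr K n v uu M" and v: "v \<in> vecs n"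
  shows "v = lcomb uu (map (\<lambda>i j. M i j) [0..<length uu])"
proof
  fix l
  note R' = R[unfolded supp_repr_def]
  show "v l = lcomb uu (map (\<lambda>i j. M i j) [0..<length uu]) l"
  proof (cases "l < n")
    case True thus ?thesis unfolding lcomb_def using R' by simp
  next
    case False thus ?thesis unfolding lcomb_def using R' v unfolding vecs_def by simp
  qed
qed

lemma lcomb_rows_vecs:
  assumes "\<forall>i j. j \<ge> n \<longrightarrow> M i j = 0"
  shows "lcomb cs (map (\<lambda>i j. M i j) [0..<r]) \<in> vecs n"
  unfolding vecs_def lcomb_def using assms by simp

lemma lin_indep2:
  assumes "lin_indep UNIV (v1 # v2 # rest)"
  shows "(\<lambda>i. a * v1 i + b * v2 i) = (\<lambda>i. 0) \<Longrightarrow> a = 0 \<and> b = 0"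
proof -
  assume h: "(\<lambda>i. a * v1 i + b * v2 i) = (\<lambda>i. 0)"
  define cs where "cs = a # b # replicate (length rest) 0"
  have "lcomb cs (v1 # v2 # rest) = (\<lambda>i. a * v1 i + b * v2 i)"
    unfolding cs_def lcomb_Cons lcomb_zero by (simp add: add.assoc)
  hence "lcomb cs (v1 # v2 # rest) = (\<lambda>i. 0)" using h by simp
  moreover have "length cs = length (v1 # v2 # rest)" unfolding cs_def by simp
  ultimately have "set cs \<subseteq> {0}" using assms unfolding lin_indep_def by blast
  thus "a = 0 \<and> b = 0" unfolding cs_def by simp
qed

lemma dir1:
  fixes C :: "(nat \<Rightarrow> 'a::{finite,field}) set" and q m n k :: nat
  assumes pe: "prime p" "e > 0" "q = p ^ e"
    and card: "card (UNIV :: 'a set) = q ^ m" and "m > 0" and "k \<ge> 2"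
    and code: "is_code n k C"
    and min: "minimal_code q n C"
  shows "gen_rank_weight q n C 2 \<ge> m + 1"
proof (rule ccontr)
  define K where "K = (subfield_q q :: 'a set)"
  have Kf: "subf K" unfolding K_def using subf_subfield[OF pe card] .
  have cardK: "card K = q" unfolding K_def using card_subfield[OF pe card \<open>m > 0\<close>] .
  have q0: "q > 0" using pe prime_gt_0_nat by simp
  have Cs: "vsubspace UNIV C" "C \<subseteq> vecs n" "vdim UNIV C = k" using code unfolding is_code_def by auto
  assume "\<not> gen_rank_weight q n C 2 \<ge> m + 1"
  hence d2: "gen_rank_weight q n C 2 \<le> m" by simp
  have ex: "\<exists>d A. vsubspace UNIV A \<and> A \<subseteq> vecs n \<and> galois_closed q A \<and> vdim UNIV (A \<inter> C) \<ge> 2 \<and> vdim UNIV A = d"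
  proof (intro exI conjI)
    show "vsubspace UNIV (vecs n :: (nat \<Rightarrow> 'a) set)" by (rule vsubspace_vecs)
    show "galois_closed q (vecs n :: (nat \<Rightarrow> 'a) set)" unfolding galois_closed_def vecs_def
      using q0 by (simp add: zero_power)
    have "vecs n \<inter> C = C" using Cs by blast
    thus "vdim UNIV (vecs n \<inter> C) \<ge> 2" using Cs \<open>k \<ge> 2\<close> by simp
  qed auto
  obtain A where A: "vsubspace UNIV A" "A \<subseteq> vecs n" "galois_closed q A" "vdim UNIV (A \<inter> C) \<ge> 2"
    "vdim UNIV A = gen_rank_weight q n C 2"
    using LeastI_ex[OF ex] unfolding gen_rank_weight_def by blast
  obtain ws where ws: "set ws \<subseteq> A" "lin_indep UNIV ws" "A \<subseteq> lsp ws" "\<forall>w\<in>set ws. \<forall>i. w i ^ q = w i"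
    using galois_basis[OF q0 A(1,2,3)] by blast
  obtain B where B: "length B = vdim UNIV A" "lin_indep UNIV B" "set B \<subseteq> A" "A \<subseteq> lsp B"
    using vdim_basis[OF A(1,2)] by blast
  have "lsp ws \<subseteq> lsp B" using lsp_sub[OF A(1) ws(1)] B(4) by blast
  hence "length ws \<le> length B" by (rule indep_le[OF ws(2)])
  hence tm: "length ws \<le> m" using B(1) A(5) d2 by simp
  define t where "t = length ws"
  have ACs: "vsubspace UNIV (A \<inter> C)" using vsubspace_Int[OF A(1) Cs(1)] .
  have ACv: "A \<inter> C \<subseteq> vecs n" using A(2) by blast
  obtain B' where B': "length B' = vdim UNIV (A \<inter> C)" "lin_indep UNIV B'" "set B' \<subseteq> A \<inter> C"
    using vdim_basis[OF ACs ACv] by blast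
  obtain v1 v2 rest where B'eq: "B' = v1 # v2 # rest"
    using B'(1) A(4) by (cases B'; cases "tl B'") auto
  have ind2: "\<And>a b. (\<lambda>i. a * v1 i + b * v2 i) = (\<lambda>i. 0) \<Longrightarrow> a = 0 \<and> b = 0"
    using lin_indep2 B'(2) unfolding B'eq by blast
  have v1AC: "v1 \<in> A \<inter> C" and v2AC: "v2 \<in> A \<inter> C" using B'(3) unfolding B'eq by auto
  obtain \<alpha> where \<alpha>: "length \<alpha> = length ws" "v1 = lcomb \<alpha> ws" using v1AC ws(3) by (blast elim: lspE)
  obtain \<beta> where \<beta>: "length \<beta> = length ws" "v2 = lcomb \<beta> ws" using v2AC ws(3) by (blast elim: lspE)
  define I where "I = {(dotp n v1 y, dotp n v2 y) | y. \<forall>j. y j \<in> K}"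
  have wsK: "dotp n (ws ! i) y \<in> K" if "i < t" "\<forall>j. y j \<in> K" for i y
  proof -
    have "ws ! i \<in> set ws" using that t_def by simp
    hence "\<forall>j. (ws ! i) j \<in> K" using ws(4) unfolding K_def subfield_q_def by blast
    thus ?thesis unfolding dotp_def using that(2) by (auto intro!: subf_sum[OF Kf] subfD(4)[OF Kf])
  qed
  have "I \<subseteq> (\<lambda>\<tau>. ((\<Sum>i<t. \<alpha> ! i * \<tau> ! i), (\<Sum>i<t. \<beta> ! i * \<tau> ! i))) ` {\<tau>. set \<tau> \<subseteq> K \<and> length \<tau> = t}"
  proof
    fix z assume "z \<in> I"
    then obtain y where y: "\<forall>j. y j \<in> K" "z = (dotp n v1 y, dotp n v2 y)" unfolding I_def by blast
    define \<tau> where "\<tau> = map (\<lambda>i. dotp n (ws ! i) y) [0..<t]"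
    have "set \<tau> \<subseteq> K" unfolding \<tau>_def using wsK y(1) by auto
    moreover have "length \<tau> = t" unfolding \<tau>_def by simp
    moreover have "z = ((\<Sum>i<t. \<alpha> ! i * \<tau> ! i), (\<Sum>i<t. \<beta> ! i * \<tau> ! i))"
      unfolding y(2) \<alpha>(2) \<beta>(2) dotp_lcomb \<tau>_def t_def by simp
    ultimately show "z \<in> (\<lambda>\<tau>. ((\<Sum>i<t. \<alpha> ! i * \<tau> ! i), (\<Sum>i<t. \<beta> ! i * \<tau> ! i))) ` {\<tau>. set \<tau> \<subseteq> K \<and> length \<tau> = t}"
      by blast
  qed
  note Isub = this
  have finK: "finite K" by simp
  have finD: "finite {\<tau>. set \<tau> \<subseteq> K \<and> length \<tau> = t}" using finite_lists_length_eq[OF finK] by simp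
  have "card I \<le> card ((\<lambda>\<tau>. ((\<Sum>i<t. \<alpha> ! i * \<tau> ! i), (\<Sum>i<t. \<beta> ! i * \<tau> ! i))) ` {\<tau>. set \<tau> \<subseteq> K \<and> length \<tau> = t})"
    by (rule card_mono[OF finite_imageI[OF finD] Isub])
  also have "\<dots> \<le> card {\<tau>. set \<tau> \<subseteq> K \<and> length \<tau> = t}" by (rule card_image_le[OF finD])
  also have "\<dots> = q ^ t" using card_lists_length_eq[OF finK] cardK by simp
  also have "\<dots> \<le> q ^ m" using tm t_def q0 by (simp add: power_increasing)
  finally have cardI: "card I \<le> q ^ m" .
  have finI: "finite I" by simp
  have I0: "(0, 0) \<in> I" unfolding I_def dotp_def using subfD(1)[OF Kf]
    by (intro CollectI exI[of _ "\<lambda>j. 0"]) auto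
  have key: "\<exists>a b. \<not> (a = 0 \<and> b = 0) \<and> (\<forall>y. (\<forall>j. y j \<in> K) \<longrightarrow> a * dotp n v1 y + b * dotp n v2 y = 0
      \<longrightarrow> dotp n v1 y = 0 \<and> dotp n v2 y = 0)"
  proof (rule ccontr)
    assume "\<not> ?thesis"
    hence H: "\<And>a b. \<not> (a = 0 \<and> b = 0) \<Longrightarrow> \<exists>y. (\<forall>j. y j \<in> K) \<and> a * dotp n v1 y + b * dotp n v2 y = 0
      \<and> \<not> (dotp n v1 y = 0 \<and> dotp n v2 y = 0)" by blast
    define g :: "'a \<times> 'a \<Rightarrow> 'a \<times> 'a" where "g = (\<lambda>(s, t). if t = 0 then (0, 1) else (1, - s / t))"
    define D :: "('a \<times> 'a) set" where "D = insert (0, 1) (range (\<lambda>b. (1, b)))"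
    have "D \<subseteq> g ` (I - {(0, 0)})"
    proof
      fix d assume "d \<in> D"
      hence "d = (0, 1) \<or> (\<exists>b. d = (1, b))" unfolding D_def by auto
      thus "d \<in> g ` (I - {(0, 0)})"
      proof
        assume d: "d = (0, 1)"
        obtain y where y: "\<forall>j. y j \<in> K" "0 * dotp n v1 y + 1 * dotp n v2 y = 0"
          "\<not> (dotp n v1 y = 0 \<and> dotp n v2 y = 0)" using H[of 0 1] by auto
        have "(dotp n v1 y, dotp n v2 y) \<in> I - {(0, 0)}" unfolding I_def using y by auto
        moreover have "g (dotp n v1 y, dotp n v2 y) = d" unfolding g_def d using y by simp
        ultimately show ?thesis by force
      next
        assume "\<exists>b. d = (1, b)"
        then obtain b where d: "d = (1, b)" by blast
        obtain y where y: "\<forall>j. y j \<in> K" "1 * dotp n v1 y + b * dotp n v2 y = 0"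
          "\<not> (dotp n v1 y = 0 \<and> dotp n v2 y = 0)" using H[of 1 b] by auto
        have t0: "dotp n v2 y \<noteq> 0" using y(2,3) by auto
        have "(dotp n v1 y, dotp n v2 y) \<in> I - {(0, 0)}" unfolding I_def using y by auto
        moreover have "b = - dotp n v1 y / dotp n v2 y" using y(2) t0 by (simp add: field_simps eq_neg_iff_add_eq_0)
        hence "g (dotp n v1 y, dotp n v2 y) = d" unfolding g_def d using t0 by simp
        ultimately show ?thesis by force
      qed
    qed
    hence "card D \<le> card (g ` (I - {(0, 0)}))" by (rule card_mono[rotated]) simp
    also have "\<dots> \<le> card (I - {(0, 0)})" by (rule card_image_le) simp
    also have "\<dots> = card I - 1" using I0 finI by simp
    finally have c1: "card D \<le> card I - 1" .
    have "inj (\<lambda>b::'a. (1::'a, b))" by (auto intro: injI)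
    hence "card (range (\<lambda>b::'a. (1::'a, b))) = card (UNIV :: 'a set)" by (rule card_image)
    moreover have "(0, 1) \<notin> range (\<lambda>b::'a. (1::'a, b))" by auto
    ultimately have "card D = card (UNIV :: 'a set) + 1" unfolding D_def by simp
    with c1 cardI card show False by linarith
  qed
  then obtain a b where ab: "\<not> (a = 0 \<and> b = 0)"
    and abrel: "\<forall>y. (\<forall>j. y j \<in> K) \<longrightarrow> a * dotp n v1 y + b * dotp n v2 y = 0 \<longrightarrow> dotp n v1 y = 0 \<and> dotp n v2 y = 0"
    by blast
  define c where "c = (\<lambda>i. a * v1 i + b * v2 i)"
  have cC: "c \<in> C" unfolding c_def
    using vs_add[OF Cs(1) vs_scale[OF Cs(1) _ ] vs_scale[OF Cs(1) _ ]] v1AC v2AC by blast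
  have c0: "c \<noteq> (\<lambda>i. 0)" unfolding c_def using ind2 ab by blast
  have mc: "minimal_codeword q n C c" using min cC c0 unfolding minimal_code_def by blast
  have dc: "dotp n c y = a * dotp n v1 y + b * dotp n v2 y" for y unfolding c_def by (rule dotp_lin)
  have "rank_supp K n v1 \<subseteq> rank_supp K n c"
    by (rule supp_mono[OF Kf]) (use abrel dc in auto)
  hence "\<exists>l. v1 = (\<lambda>i. l * c i)" using mc v1AC unfolding minimal_codeword_def K_def by blast
  then obtain l1 where l1: "v1 = (\<lambda>i. l1 * c i)" by blast
  have "rank_supp K n v2 \<subseteq> rank_supp K n c"
    by (rule supp_mono[OF Kf]) (use abrel dc in auto)
  hence "\<exists>l. v2 = (\<lambda>i. l * c i)" using mc v2AC unfolding minimal_codeword_def K_def by blast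
  then obtain l2 where l2: "v2 = (\<lambda>i. l2 * c i)" by blast
  have "(\<lambda>i. l2 * v1 i + (- l1) * v2 i) = (\<lambda>i. 0)" unfolding l1 l2 by (simp add: algebra_simps)
  hence "l2 = 0 \<and> - l1 = 0" by (rule ind2)
  hence "v1 = (\<lambda>i. 0)" using l1 by simp
  hence "(\<lambda>i. 1 * v1 i + 0 * v2 i) = (\<lambda>i. 0)" by simp
  hence "(1::'a) = 0 \<and> (0::'a) = 0" by (rule ind2)
  thus False by simp
qed

lemma dir2:
  fixes C :: "(nat \<Rightarrow> 'a::{finite,field}) set" and q m n k :: nat
  assumes pe: "prime p" "e > 0" "q = p ^ e"
    and card: "card (UNIV :: 'a set) = q ^ m" and "m > 0"
    and code: "is_code n k C"
    and d2: "gen_rank_weight q n C 2 \<ge> m + 1"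
  shows "minimal_code q n C"
proof -
  define K where "K = (subfield_q q :: 'a set)"
  have Kf: "subf K" unfolding K_def using subf_subfield[OF pe card] .
  have cardK: "card K = q" unfolding K_def using card_subfield[OF pe card \<open>m > 0\<close>] .
  have q0: "q > 0" using pe prime_gt_0_nat by simp
  have p2: "p \<ge> 2" using prime_ge_2_nat pe(1) by blast
  have "p ^ 1 \<le> p ^ e" using pe(2) p2 by (intro power_increasing) auto
  hence q2: "q \<ge> 2" using pe(3) p2 by simp
  have Cs: "vsubspace UNIV C" "C \<subseteq> vecs n" using code unfolding is_code_def by auto
  have fs: "(sum f S) ^ q = (\<Sum>i\<in>S. f i ^ q)" for f :: "nat \<Rightarrow> 'a" and S
    using frob_sum[OF pe(1) _ pe(3), of "e * m" f S] card pe(3) by (simp add: power_mult)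
  show ?thesis unfolding minimal_code_def minimal_codeword_def K_def[symmetric]
  proof (intro ballI impI, intro conjI)
    fix v assume vC: "v \<in> C" and v0: "v \<noteq> (\<lambda>i. 0)"
    show "v \<in> C" by fact
    show "v \<noteq> (\<lambda>i. 0)" by fact
    show "\<forall>u\<in>C. rank_supp K n u \<subseteq> rank_supp K n v \<longleftrightarrow> (\<exists>c. u = (\<lambda>i. c * v i))"
    proof (rule ballI, rule iffI)
      fix u assume uC: "u \<in> C" and "\<exists>c. u = (\<lambda>i. c * v i)"
      then obtain c where c: "u = (\<lambda>i. c * v i)" by blast
      show "rank_supp K n u \<subseteq> rank_supp K n v"
        by (rule supp_mono[OF Kf]) (auto simp: c dotp_scale)
    next
      fix u assume uC: "u \<in> C" and sub: "rank_supp K n u \<subseteq> rank_supp K n v"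
      show "\<exists>c. u = (\<lambda>i. c * v i)"
      proof (rule ccontr)
        assume nm: "\<not> (\<exists>c. u = (\<lambda>i. c * v i))"
        obtain uu M where R: "supp_repr K n v uu M" "rank_supp K n v = vspan K {(\<lambda>j. M i j) | i. i < length uu}"
          using RS[OF Kf] by blast
        note R' = R(1)[unfolded supp_repr_def]
        define r where "r = length uu"
        have "q ^ r \<le> q ^ m" using sindep_len[OF Kf] R' cardK card r_def by metis
        hence rm: "r \<le> m" using q2 by (simp add: power_le_imp_le_exp)
        define rowsl where "rowsl = map (\<lambda>i j. M i j) [0..<r]"
        define A where "A = lsp rowsl"
        have sA: "vsubspace UNIV A" unfolding A_def by (rule vsubspace_lsp)
        have vA: "v \<in> A" unfolding A_def rowsl_def r_def
          using lcomb_rows[OF R(1)] vC Cs lspI[of uu] by (metis length_map length_upt minus_nat.diff_0 subsetD)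
        have rowsA: "{(\<lambda>j. M i j) | i. i < length uu} \<subseteq> A"
        proof
          fix x assume "x \<in> {(\<lambda>j. M i j) | i. i < length uu}"
          then obtain i where i: "i < r" "x = (\<lambda>j. M i j)" unfolding r_def by blast
          hence "x \<in> set rowsl" unfolding rowsl_def by auto
          thus "x \<in> A" unfolding A_def using set_lsp by blast
        qed
        have rsvA: "rank_supp K n v \<subseteq> A" unfolding R(2)
          by (rule vspan_sub[OF vsubspace_UNIV_K[OF sA] rowsA])
        obtain uu2 M2 where R2: "supp_repr K n u uu2 M2" "rank_supp K n u = vspan K {(\<lambda>j. M2 i j) | i. i < length uu2}"
          using RS[OF Kf] by blast
        define rows2 where "rows2 = map (\<lambda>i j. M2 i j) [0..<length uu2]"
        have u_eq: "u = lcomb uu2 rows2" unfolding rows2_def using lcomb_rows[OF R2(1)] uC Cs by blast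
        have "set rows2 \<subseteq> rank_supp K n u" unfolding R2(2)
        proof
          fix x assume "x \<in> set rows2"
          then obtain i where "i < length uu2" "x = (\<lambda>j. M2 i j)" unfolding rows2_def by auto
          hence "x \<in> {(\<lambda>j. M2 i j) | i. i < length uu2}" by blast
          thus "x \<in> vspan K {(\<lambda>j. M2 i j) | i. i < length uu2}" by (rule in_vspan[OF Kf])
        qed
        hence "set rows2 \<subseteq> A" using sub rsvA by blast
        hence uA: "u \<in> A" unfolding u_eq by (rule lcomb_in[OF sA]) (auto simp: rows2_def)
        have Av: "A \<subseteq> vecs n"
        proof
          fix x assume "x \<in> A"
          then obtain cs where "x = lcomb cs rowsl" unfolding A_def by (blast elim: lspE)
          moreover have "\<forall>i j. n \<le> j \<longrightarrow> M i j = 0" using R' by auto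
          ultimately show "x \<in> vecs n" unfolding rowsl_def using lcomb_rows_vecs by metis
        qed
        have galA: "galois_closed q A" unfolding galois_closed_def
        proof
          fix x assume "x \<in> A"
          then obtain cs where cs: "length cs = length rowsl" "x = lcomb cs rowsl" unfolding A_def by (blast elim: lspE)
          have "(\<lambda>i. x i ^ q) = lcomb (map (\<lambda>c. c ^ q) cs) rowsl"
          proof
            fix l
            have "x l ^ q = (\<Sum>k<r. cs ! k * M k l) ^ q" unfolding cs(2) lcomb_def rowsl_def by simp
            also have "\<dots> = (\<Sum>k<r. (cs ! k) ^ q * (M k l) ^ q)" by (simp add: fs power_mult_distrib)
            also have "\<dots> = (\<Sum>k<r. (cs ! k) ^ q * M k l)"
              using R' unfolding K_def subfield_q_def by simp
            also have "\<dots> = lcomb (map (\<lambda>c. c ^ q) cs) rowsl l"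
              unfolding lcomb_def rowsl_def using cs(1) rowsl_def by simp
            finally show "x l ^ q = lcomb (map (\<lambda>c. c ^ q) cs) rowsl l" .
          qed
          thus "(\<lambda>i. x i ^ q) \<in> A" unfolding A_def using lspI[of "map (\<lambda>c. c ^ q) cs" rowsl] cs(1) by simp
        qed
        obtain B where B: "length B = vdim UNIV A" "lin_indep UNIV B" "set B \<subseteq> A" "A \<subseteq> lsp B"
          using vdim_basis[OF sA Av] by blast
        have "lsp B \<subseteq> lsp rowsl" using lsp_sub[OF sA B(3)] unfolding A_def .
        hence "length B \<le> length rowsl" by (rule indep_le[OF B(2)])
        hence dimA: "vdim UNIV A \<le> m" using B(1) rm unfolding rowsl_def by simp
        have ACs: "vsubspace UNIV (A \<inter> C)" using vsubspace_Int[OF sA Cs(1)] .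
        have ACv: "A \<inter> C \<subseteq> vecs n" using Av by blast
        obtain B' where B': "length B' = vdim UNIV (A \<inter> C)" "lin_indep UNIV B'" "set B' \<subseteq> A \<inter> C" "A \<inter> C \<subseteq> lsp B'"
          using vdim_basis[OF ACs ACv] by blast
        have ind: "lin_indep UNIV [v, u]"
          unfolding lin_indep_def
        proof (intro allI impI)
          fix cs :: "'a list" assume h: "length cs = length [v, u] \<and> set cs \<subseteq> UNIV \<and> lcomb cs [v, u] = (\<lambda>i. 0)"
          then obtain a b where cs: "cs = [a, b]" by (cases cs; cases "tl cs") auto
          have eq: "(\<lambda>i. a * v i + b * u i) = (\<lambda>i. 0)" using h unfolding cs lcomb_Cons by simp
          have b0: "b = 0"
          proof (rule ccontr)
            assume "b \<noteq> 0"
            hence "u = (\<lambda>i. (- a / b) * v i)" using eq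
              by (auto simp: fun_eq_iff field_simps eq_neg_iff_add_eq_0 dest: fun_cong)
            with nm show False by blast
          qed
          have a0: "a = 0"
          proof (rule ccontr)
            assume "a \<noteq> 0"
            hence "v = (\<lambda>i. 0)" using eq b0 by (auto simp: fun_eq_iff dest: fun_cong)
            with v0 show False by simp
          qed
          show "set cs \<subseteq> {0}" using a0 b0 cs by simp
        qed
        have "lsp [v, u] \<subseteq> lsp B'"
          using lsp_sub[OF ACs, of "[v, u]"] vA uA vC uC B'(4) by auto
        hence "length [v, u] \<le> length B'" by (rule indep_le[OF ind])
        hence dimAC: "vdim UNIV (A \<inter> C) \<ge> 2" using B'(1) by simp
        have "gen_rank_weight q n C 2 \<le> vdim UNIV A"
          unfolding gen_rank_weight_def
          by (rule Least_le) (use sA Av galA dimAC in blast)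
        with dimA d2 show False by simp
      qed
    qed
  qed
qed

theorem theorem3p4:
  fixes C :: "(nat \<Rightarrow> 'a::{finite,field}) set" and q m n k :: nat
  assumes "\<exists>p e. prime p \<and> e > 0 \<and> q = p ^ e"
    and "card (UNIV :: 'a set) = q ^ m" and "m > 0" and "n > 0" and "k \<ge> 2"
    and "is_code n k C"
    and "nondegenerate q n k C"
  shows "minimal_code q n C \<longleftrightarrow> gen_rank_weight q n C 2 \<ge> m + 1"
proof -
  obtain p e where pe: "prime p" "e > 0" "q = p ^ e" using assms(1) by blast
  show ?thesis
  proof
    assume "minimal_code q n C"
    thus "gen_rank_weight q n C 2 \<ge> m + 1" by (rule dir1[OF pe assms(2) assms(3) assms(5) assms(6)])
  next
    assume "gen_rank_weight q n C 2 \<ge> m + 1"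
    thus "minimal_code q n C" by (rule dir2[OF pe assms(2) assms(3) assms(6)])
  qed
qed

end
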